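(* Let $\rho>0$ and let $k$ be a nonzero integer. For $X=\alpha\rho>0$ define \[ Z_k(X)=\frac{X^2\left(1-(-1)^k e^{-\pi X}\right)}{\left(k^2+X^2\right)\left(1-e^{-\pi X}\right)}. \] Then $Z_k$ is monotonically increasing in $X=\alpha\rho$, and \[ \lim_{\alpha\rho\to 0} Z_k=0,\qquad \lim_{\alpha\rho\to\infty} Z_k=1 . \]
   Context: Here $\alpha=(\sigma-1)\tau\ge 0$, where $\sigma>1$ is an elasticity of substitution and $\tau\ge0$ a transport-cost parameter, and $\rho>0$ is the radius of a circle; $Z_k$ depends on $\alpha$ and $\rho$ only through the product $\alpha\rho$. *)

theory Defs
  imports "HOL-Analysis.Analysis"
begin

definition Zk :: "int \<Rightarrow> real \<Rightarrow> real" where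
  "Zk k X = X^2 * (1 - (-1) ^ nat \<bar>k\<bar> * exp (-pi * X)) /
            ((real_of_int k ^ 2 + X^2) * (1 - exp (-pi * X)))"

end

theory Submission
  imports Defs "HOL-Real_Asymp.Real_Asymp"
begin

lemma exp_cubic_lower: assumes "(y::real) \<ge> 0" shows "1 + y + y^2/2 + y^3/6 \<le> exp y"
proof -
  obtain t where t: "exp y = (\<Sum>m<4. (y ^ m) / fact m) + (exp t / fact 4) * y ^ 4"
    using Maclaurin_exp_le[of y 4] by blast
  have "(\<Sum>m<4. (y ^ m) / fact m) = 1 + y + y^2/2 + y^3/6"
    by (simp add: numeral_eq_Suc fact_numeral eval_nat_numeral)
  moreover have "(exp t / fact 4) * y ^ 4 \<ge> 0" using assms by simp
  ultimately show ?thesis using t by linarith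
qed

lemma expm_upper: assumes "(y::real) \<ge> 0" shows "exp (-y) \<le> 1 - y + y^2/2"
proof -
  obtain t where t: "exp (-y) = (\<Sum>m<3. ((-y) ^ m) / fact m) + (exp t / fact 3) * (-y) ^ 3"
    using Maclaurin_exp_le[of "-y" 3] by blast
  have "(\<Sum>m<3. ((-y) ^ m) / fact m) = 1 - y + y^2/2"
    by (simp add: numeral_eq_Suc fact_numeral eval_nat_numeral)
  moreover have "(exp t / fact 3) * (-y) ^ 3 \<le> 0" using assms
    by (simp add: mult_nonneg_nonneg mult_nonpos_nonneg)
  ultimately show ?thesis using t by linarith
qed

lemma key_ineq:
  assumes c: "(c::real) \<ge> 1" and X: "X > 0"
  shows "pi * X * exp (-pi*X) * (c + X^2) \<le> c * (1 - exp (-pi*X)^2)"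
proof -
  define y where "y = pi * X"
  have y: "y > 0" using X by (simp add: y_def)
  define P where "P = exp y"
  define E where "E = exp (-y)"
  have PE: "P * E = 1" by (simp add: P_def E_def flip: exp_add)
  have Ppos: "P > 0" "E > 0" by (auto simp: P_def E_def)
  have b1: "1 + y + y^2/2 + y^3/6 \<le> P" using exp_cubic_lower y by (simp add: P_def)
  have b2: "E \<le> 1 - y + y^2/2" using expm_upper y by (simp add: E_def)
  have pd: "P - E \<ge> 2*y + y^3/6" using b1 b2 by simp
  have "3*3 \<le> pi*pi" using pi_gt3 by (intro mult_mono) auto
  hence pi2: "pi^2 \<ge> 6" by (simp add: power2_eq_square)
  have X2: "X^2 = y^2 / pi^2" by (simp add: y_def power_mult_distrib)
  have "y * X^2 = y^3 / pi^2" by (simp add: y_def field_simps power3_eq_cube power2_eq_square)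
  also have "\<dots> \<le> y^3 / 6" using pi2 y by (intro divide_left_mono) auto
  also have "\<dots> \<le> c * (y^3/6)" using c y by simp
  finally have h1: "y * X^2 \<le> c * (y^3/6)" .
  have "y * (c + X^2) \<le> c * (P - E)"
  proof -
    have "c * (P - E) \<ge> c * (2*y + y^3/6)" using pd c by (intro mult_left_mono) auto
    moreover have "c * (2*y + y^3/6) = c*y + c*y + c*(y^3/6)" by (simp add: algebra_simps)
    moreover have "c*y \<ge> 0" using c y by simp
    ultimately show ?thesis using h1 by (simp add: algebra_simps)
  qed
  hence "E * (y * (c + X^2)) \<le> E * (c * (P - E))" using Ppos by (intro mult_left_mono) auto
  moreover have "E * (c * (P - E)) = c * (1 - E^2)" using PE by (simp add: algebra_simps power2_eq_square)
  ultimately show ?thesis by (simp add: y_def E_def algebra_simps)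
qed


definition Fodd :: "real \<Rightarrow> real \<Rightarrow> real" where
  "Fodd c X = X^2 * (1 + exp (-pi*X)) / ((c + X^2) * (1 - exp (-pi*X)))"

lemma one_minus_exp_pos: "(X::real) > 0 \<Longrightarrow> 1 - exp (-pi*X) > 0"
  by simp

lemma Fodd_deriv:
  assumes c: "(c::real) \<ge> 1" and X: "X > 0"
  shows "\<exists>D. DERIV (Fodd c) X :> D \<and> D \<ge> 0"
proof -
  define E where "E = exp (-pi*X)"
  have E: "E > 0" "1 - E > 0" using X by (auto simp: E_def)
  have dN: "((\<lambda>X. X^2 * (1 + exp (-pi*X))) has_real_derivative
      (2*X*(1+E) - X^2*pi*E)) (at X)"
    unfolding E_def by (auto intro!: derivative_eq_intros simp: algebra_simps)
  have dD: "((\<lambda>X. (c + X^2) * (1 - exp (-pi*X))) has_real_derivative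
      (2*X*(1-E) + (c+X^2)*pi*E)) (at X)"
    unfolding E_def by (auto intro!: derivative_eq_intros simp: algebra_simps)
  have nz: "(c + X^2) * (1 - exp (-pi*X)) \<noteq> 0" using E c unfolding E_def
    by (smt (verit) mult_pos_pos zero_le_power2)
  have d: "DERIV (Fodd c) X :> ((2*X*(1+E) - X^2*pi*E) * ((c + X^2) * (1 - E))
        - (X^2 * (1 + E)) * (2*X*(1-E) + (c+X^2)*pi*E)) / (((c + X^2) * (1 - E)) * ((c + X^2) * (1 - E)))"
    using DERIV_divide[OF dN dD nz] unfolding Fodd_def[abs_def] E_def by simp
  have num: "(2*X*(1+E) - X^2*pi*E) * ((c + X^2) * (1 - E))
        - (X^2 * (1 + E)) * (2*X*(1-E) + (c+X^2)*pi*E)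
        = 2*X*(c*(1-E^2) - pi*X*E*(c+X^2))"
    by (simp add: algebra_simps power2_eq_square)
  have "pi*X*E*(c+X^2) \<le> c*(1-E^2)" using key_ineq[OF c X] by (simp add: E_def)
  hence "0 \<le> 2*X*(c*(1-E^2) - pi*X*E*(c+X^2))" using X by simp
  hence "0 \<le> ((2*X*(1+E) - X^2*pi*E) * ((c + X^2) * (1 - E))
        - (X^2 * (1 + E)) * (2*X*(1-E) + (c+X^2)*pi*E)) / (((c + X^2) * (1 - E)) * ((c + X^2) * (1 - E)))"
    by (subst num) simp
  with d show ?thesis by blast
qed

lemma Fodd_mono:
  assumes c: "(c::real) \<ge> 1" and "0 < x" "x \<le> y"
  shows "Fodd c x \<le> Fodd c y"
  by (rule DERIV_nonneg_imp_nondecreasing[OF \<open>x \<le> y\<close>])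
     (use assms Fodd_deriv in auto)

lemma Feven_mono:
  assumes c: "(c::real) \<ge> 1" and "0 < x" "x \<le> y"
  shows "x^2 / (c + x^2) \<le> y^2 / (c + y^2)"
proof -
  have "x^2 \<le> y^2" using assms by (intro power_mono) auto
  hence "x^2 * (c + y^2) \<le> y^2 * (c + x^2)" using c by (simp add: algebra_simps)
  moreover have "c + x^2 > 0" "c + y^2 > 0" using c by (auto intro: add_pos_nonneg)
  ultimately show ?thesis by (simp add: divide_simps)
qed

theorem lemma1:
  fixes k :: int
  assumes "k \<noteq> 0"
  shows "mono_on {0<..} (Zk k)
         \<and> (Zk k \<longlongrightarrow> 0) (at_right 0)
         \<and> (Zk k \<longlongrightarrow> 1) at_top"
proof -
  define c where "c = real_of_int k ^ 2"
  have c1: "c \<ge> 1" unfolding c_def using assms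
    by (metis of_int_1_le_iff of_int_power one_le_power power2_eq_square zero_less_power2 int_one_le_iff_zero_less
        zero_le_power2 not_le zero_less_one) 
  have cpos: "c > 0" using c1 by simp
  have s: "(-1::real) ^ nat \<bar>k\<bar> = 1 \<or> (-1::real) ^ nat \<bar>k\<bar> = -1"
    by (simp add: minus_one_power_iff)
  then show ?thesis
  proof
    assume s1: "(-1::real) ^ nat \<bar>k\<bar> = 1"
    have Z: "Zk k = (\<lambda>X. X^2 * (1 - exp (-pi * X)) / ((c + X^2) * (1 - exp (-pi * X))))"
      by (rule ext) (simp add: Zk_def s1 c_def)
    have Zpos: "Zk k X = X^2 / (c + X^2)" if "X > 0" for X
      using that unfolding Z by simp
    have "mono_on {0<..} (Zk k)"
      by (rule mono_onI) (auto simp: Zpos intro!: Feven_mono[OF c1])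
    moreover have "(Zk k \<longlongrightarrow> 0) (at_right 0)" unfolding Z using cpos by real_asymp
    moreover have "(Zk k \<longlongrightarrow> 1) at_top" unfolding Z using cpos by real_asymp
    ultimately show ?thesis by blast
  next
    assume s1: "(-1::real) ^ nat \<bar>k\<bar> = -1"
    have Z: "Zk k = (\<lambda>X. X^2 * (1 + exp (-pi * X)) / ((c + X^2) * (1 - exp (-pi * X))))"
      by (rule ext) (simp add: Zk_def s1 c_def)
    have "mono_on {0<..} (Zk k)"
    proof (rule mono_onI)
      fix r t :: real assume "r \<in> {0<..}" "t \<in> {0<..}" "r \<le> t"
      hence "Fodd c r \<le> Fodd c t" using Fodd_mono[OF c1] by auto
      thus "Zk k r \<le> Zk k t" unfolding Z Fodd_def by simp
    qed
    moreover have "(Zk k \<longlongrightarrow> 0) (at_right 0)" unfolding Z using cpos by real_asymp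
    moreover have "(Zk k \<longlongrightarrow> 1) at_top" unfolding Z using cpos by real_asymp
    ultimately show ?thesis by blast
  qed
qed

end
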